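(* Let $\Sigma$ be a ranked alphabet, $B$ a strong bimonoid and $\mathcal{A}$ a $(\Sigma,B)$-wta. If $B$ is locally finite, or if $B$ is multiplicatively locally finite and $\mathcal{A}$ is bottom-up deterministic, then the Nerode $(\Sigma,B)$-algebra $\mathcal{N}(\mathcal{A})$ is finite and $[\![\mathcal{A}]\!]^{\mathrm{init}}=[\![\mathrm{rel}(\mathcal{N}(\mathcal{A}))]\!]^{\mathrm{init}}$.
   Context: Ranked alphabet $\Sigma$ ($\Sigma^{(0)}\ne\emptyset$), trees $T_\Sigma$; strong bimonoid $(B,\oplus,\otimes,\mathbb{0},\mathbb{1})$ (commutative monoid $(B,\oplus,\mathbb{0})$, monoid $(B,\otimes,\mathbb{1})$, $\mathbb{0}\ne\mathbb{1}$, $\mathbb{0}$ absorbing, no distributivity). $B$ is locally finite if every finite subset generates a finite subalgebra of $(B,\oplus,\otimes,\mathbb{0},\mathbb{1})$; multiplicatively locally finite if every finite subset generates a finite submonoid of $(B,\otimes,\mathbb{1})$. $(\Sigma,B)$-wta $\mathcal{A}=(Q,\delta,F)$: $Q$ finite nonempty, $\delta_k:Q^k\times\Sigma^{(k)}\times Q\to B$, $F:Q\to B$. Vector algebra $\mathrm{V}(\mathcal{A})=(B^Q,\delta_{\mathcal{A}})$, $\delta_{\mathcal{A}}(\sigma)(v_1,\dots,v_k)_q=\bigoplus_{p_1,\dots,p_k}\big(\bigotimes_{i=1}^k(v_i)_{p_i}\big)\otimes\delta_k(p_1\dots p_k,\sigma,q)$; $h_{\mathrm{V}(\mathcal{A})}$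 the unique homomorphism from $T_\Sigma$; $[\![\mathcal{A}]\!]^{\mathrm{init}}(\xi)=\bigoplus_q h_{\mathrm{V}(\mathcal{A})}(\xi)_q\otimes F_q$. Bottom-up deterministic: for all $k,\sigma,q_1,\dots,q_k$ at most one $q$ with $\delta_k(q_1\dots q_k,\sigma,q)\ne\mathbb{0}$. Crisp-deterministic: exactly one $q$ with value $\mathbb{1}$ and all others $\mathbb{0}$. Nerode algebra $\mathcal{N}(\mathcal{A})=(Q_{\mathcal{N}},\theta_{\mathcal{N}},F_{\mathcal{N}})$: smallest subalgebra of $\mathrm{V}(\mathcal{A})$ with $(F_{\mathcal{N}})_v=\bigoplus_q v_q\otimes F_q$; finite if $Q_{\mathcal{N}}$ finite. For finite $(\Sigma,B)$-algebra $(P,\theta,G)$, $\mathrm{rel}(P,\theta,G)=(P,\delta',G)$ with $\delta'_k(p_1\dots p_k,\sigma,p)=\mathbb{1}$ iff $\theta(\sigma)(p_1,\dots,p_k)=p$, else $\mathbb{0}$. *)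

theory Defs
  imports Main
begin

text \<open>Strong bimonoids are rendered by the type class combination
  comm_monoid_add (for (B,oplus,0)), monoid_mult (for (B,otimes,1)),
  mult_zero (0 absorbing) and zero_neq_one; no distributivity is assumed.\<close>

class strong_bimonoid = comm_monoid_add + monoid_mult + mult_zero + zero_neq_one

datatype 'f rtree = Node 'f "'f rtree list"

inductive_set trees :: "'f set \<Rightarrow> ('f \<Rightarrow> nat) \<Rightarrow> 'f rtree set"
  for \<Sigma> :: "'f set" and rk :: "'f \<Rightarrow> nat" where
  "\<sigma> \<in> \<Sigma> \<Longrightarrow> length ts = rk \<sigma> \<Longrightarrow> \<forall>t\<in>set ts. t \<in> trees \<Sigma> rk \<Longrightarrow> Node \<sigma> ts \<in> trees \<Sigma> rk"

definition ranked_alphabet :: "'f set \<Rightarrow> ('f \<Rightarrow> nat) \<Rightarrow> bool" where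
  "ranked_alphabet \<Sigma> rk \<longleftrightarrow> finite \<Sigma> \<and> (\<exists>\<sigma>\<in>\<Sigma>. rk \<sigma> = 0)"

inductive_set gen_subalg :: "'b::strong_bimonoid set \<Rightarrow> 'b set" for A where
  "a \<in> A \<Longrightarrow> a \<in> gen_subalg A"
| "0 \<in> gen_subalg A"
| "1 \<in> gen_subalg A"
| "a \<in> gen_subalg A \<Longrightarrow> b \<in> gen_subalg A \<Longrightarrow> a + b \<in> gen_subalg A"
| "a \<in> gen_subalg A \<Longrightarrow> b \<in> gen_subalg A \<Longrightarrow> a * b \<in> gen_subalg A"

inductive_set gen_submon :: "'b::strong_bimonoid set \<Rightarrow> 'b set" for A where
  "a \<in> A \<Longrightarrow> a \<in> gen_submon A"
| "1 \<in> gen_submon A"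
| "a \<in> gen_submon A \<Longrightarrow> b \<in> gen_submon A \<Longrightarrow> a * b \<in> gen_submon A"

definition locally_finite :: "'b::strong_bimonoid itself \<Rightarrow> bool" where
  "locally_finite _ \<longleftrightarrow> (\<forall>A::'b set. finite A \<longrightarrow> finite (gen_subalg A))"

definition mult_locally_finite :: "'b::strong_bimonoid itself \<Rightarrow> bool" where
  "mult_locally_finite _ \<longleftrightarrow> (\<forall>A::'b set. finite A \<longrightarrow> finite (gen_submon A))"

text \<open>A (Sigma,B)-wta is given by a finite nonempty state set Q, a transition
  weight function delta (delta ps sigma q, with length ps = rk sigma) and
  root weights F.  Vectors in B^Q are functions 'q => 'b that are 0 outside Q.\<close>

definition wta :: "'q set \<Rightarrow> bool" where
  "wta Q \<longleftrightarrow> finite Q \<and> Q \<noteq> {}"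

definition state_lists :: "'q set \<Rightarrow> nat \<Rightarrow> 'q list set" where
  "state_lists Q k = {ps. length ps = k \<and> set ps \<subseteq> Q}"

definition vec_op :: "'q set \<Rightarrow> ('q list \<Rightarrow> 'f \<Rightarrow> 'q \<Rightarrow> 'b::strong_bimonoid) \<Rightarrow> 'f
    \<Rightarrow> ('q \<Rightarrow> 'b) list \<Rightarrow> ('q \<Rightarrow> 'b)" where
  "vec_op Q \<delta> \<sigma> vs = (\<lambda>q. if q \<in> Q then
     (\<Sum>ps\<in>state_lists Q (length vs). prod_list (map2 (\<lambda>v p. v p) vs ps) * \<delta> ps \<sigma> q)
     else 0)"

primrec hV :: "'q set \<Rightarrow> ('q list \<Rightarrow> 'f \<Rightarrow> 'q \<Rightarrow> 'b::strong_bimonoid) \<Rightarrow> 'f rtree \<Rightarrow> ('q \<Rightarrow> 'b)" where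
  "hV Q \<delta> (Node \<sigma> ts) = vec_op Q \<delta> \<sigma> (map (hV Q \<delta>) ts)"

definition init_sem :: "'q set \<Rightarrow> ('q list \<Rightarrow> 'f \<Rightarrow> 'q \<Rightarrow> 'b::strong_bimonoid) \<Rightarrow> ('q \<Rightarrow> 'b)
    \<Rightarrow> 'f rtree \<Rightarrow> 'b" where
  "init_sem Q \<delta> F \<xi> = (\<Sum>q\<in>Q. hV Q \<delta> \<xi> q * F q)"

definition bu_deterministic :: "'f set \<Rightarrow> ('f \<Rightarrow> nat) \<Rightarrow> 'q set
    \<Rightarrow> ('q list \<Rightarrow> 'f \<Rightarrow> 'q \<Rightarrow> 'b::strong_bimonoid) \<Rightarrow> bool" where
  "bu_deterministic \<Sigma> rk Q \<delta> \<longleftrightarrow>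
     (\<forall>\<sigma>\<in>\<Sigma>. \<forall>qs\<in>state_lists Q (rk \<sigma>). \<forall>q\<in>Q. \<forall>q'\<in>Q.
        \<delta> qs \<sigma> q \<noteq> 0 \<longrightarrow> \<delta> qs \<sigma> q' \<noteq> 0 \<longrightarrow> q = q')"

text \<open>Nerode algebra: carrier = smallest subalgebra of V(A); operations are
  vec_op restricted; final weights nerode_final.\<close>
inductive_set nerode_states :: "'f set \<Rightarrow> ('f \<Rightarrow> nat) \<Rightarrow> 'q set
    \<Rightarrow> ('q list \<Rightarrow> 'f \<Rightarrow> 'q \<Rightarrow> 'b::strong_bimonoid) \<Rightarrow> ('q \<Rightarrow> 'b) set"
  for \<Sigma> rk Q \<delta> where
  "\<sigma> \<in> \<Sigma> \<Longrightarrow> length vs = rk \<sigma> \<Longrightarrow> \<forall>v\<in>set vs. v \<in> nerode_states \<Sigma> rk Q \<delta>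
     \<Longrightarrow> vec_op Q \<delta> \<sigma> vs \<in> nerode_states \<Sigma> rk Q \<delta>"

definition nerode_final :: "'q set \<Rightarrow> ('q \<Rightarrow> 'b::strong_bimonoid) \<Rightarrow> ('q \<Rightarrow> 'b) \<Rightarrow> 'b" where
  "nerode_final Q F v = (\<Sum>q\<in>Q. v q * F q)"

text \<open>rel(P,theta,G) = (P, delta', G): transition weights of the crisp automaton
  induced by the algebra operations theta.\<close>
definition rel_trans :: "('f \<Rightarrow> 'p list \<Rightarrow> 'p) \<Rightarrow> 'p list \<Rightarrow> 'f \<Rightarrow> 'p \<Rightarrow> 'b::strong_bimonoid" where
  "rel_trans \<theta> ps \<sigma> p = (if \<theta> \<sigma> ps = p then 1 else 0)"

end

theory Submission
  imports Defs "HOL-Library.FuncSet"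
begin

lemma finite_state_lists: "finite Q \<Longrightarrow> finite (state_lists Q k)"
  unfolding state_lists_def using finite_lists_length_eq[of Q k] by (simp add: conj_commute)

lemma finite_funs:
  assumes "finite Q" "finite S"
  shows "finite {v :: 'q \<Rightarrow> 'b::zero. (\<forall>q. v q \<in> S) \<and> (\<forall>q. q \<notin> Q \<longrightarrow> v q = 0)}"
proof (rule inj_on_finite[where f = "\<lambda>v. restrict v Q" and B = "\<Pi>\<^sub>E q\<in>Q. S"])
  show "inj_on (\<lambda>v. restrict v Q) {v. (\<forall>q. v q \<in> S) \<and> (\<forall>q. q \<notin> Q \<longrightarrow> v q = 0)}"
  proof (rule inj_onI)
    fix v w assume v: "v \<in> {v. (\<forall>q. v q \<in> S) \<and> (\<forall>q. q \<notin> Q \<longrightarrow> v q = 0)}"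
      and w: "w \<in> {v. (\<forall>q. v q \<in> S) \<and> (\<forall>q. q \<notin> Q \<longrightarrow> v q = 0)}"
      and e: "restrict v Q = restrict w Q"
    show "v = w"
    proof
      fix q show "v q = w q"
        using v w fun_cong[OF e, of q] by (cases "q \<in> Q") auto
    qed
  qed
  show "(\<lambda>v. restrict v Q) ` {v. (\<forall>q. v q \<in> S) \<and> (\<forall>q. q \<notin> Q \<longrightarrow> v q = 0)} \<subseteq> (\<Pi>\<^sub>E q\<in>Q. S)"
    by auto
  show "finite (\<Pi>\<^sub>E q\<in>Q. S)" using assms by (simp add: finite_PiE)
qed

lemma prod_map2_closed:
  assumes "(1::'b::monoid_mult) \<in> S" "\<And>a b. a \<in> S \<Longrightarrow> b \<in> S \<Longrightarrow> a * b \<in> S"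
    and "\<forall>v\<in>set vs. \<forall>q. v q \<in> S"
  shows "prod_list (map2 (\<lambda>v p. v p) vs ps) \<in> S"
  using assms(3)
proof (induction vs arbitrary: ps)
  case Nil then show ?case using assms(1) by simp
next
  case (Cons v vs) then show ?case using assms by (cases ps) auto
qed

lemma sum_closed:
  assumes "(0::'b::comm_monoid_add) \<in> S" "\<And>a b. a \<in> S \<Longrightarrow> b \<in> S \<Longrightarrow> a + b \<in> S"
    and "\<forall>i\<in>I. f i \<in> S"
  shows "sum f I \<in> S"
proof (cases "finite I")
  case True then show ?thesis using assms(3)
    by (induction I rule: finite_induct) (auto simp: assms)
next
  case False then show ?thesis using assms by simp
qed

lemma prod_map2_nonzero:
  "prod_list (map2 (\<lambda>v p. v p) vs ps) \<noteq> (0::'b::{monoid_mult,mult_zero}) \<Longrightarrow> length ps = length vs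
   \<Longrightarrow> i < length vs \<Longrightarrow> (vs!i) (ps!i) \<noteq> 0"
proof (induction vs arbitrary: ps i)
  case Nil then show ?case by simp
next
  case (Cons v vs)
  then obtain p ps' where ps: "ps = p # ps'" by (cases ps) auto
  have "prod_list (map2 (\<lambda>v p. v p) vs ps') \<noteq> 0"
    using Cons.prems(1) ps by (auto simp del: mult_zero_right) (metis mult_zero_right)
  moreover have "v p \<noteq> 0"
    using Cons.prems(1) ps by (auto simp del: mult_zero_left) (metis mult_zero_left)
  ultimately show ?case using Cons ps by (cases i) auto
qed

lemma prod_map2_indicator:
  "length ps = length us \<Longrightarrow>
   prod_list (map2 (\<lambda>v p. v p) (map (\<lambda>u p. if p = u then 1 else 0) us) ps) =
     (if ps = us then 1 else (0::'b::{monoid_mult,mult_zero}))"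
proof (induction us arbitrary: ps)
  case Nil then show ?case by simp
next
  case (Cons u us)
  then obtain p ps' where ps: "ps = p # ps'" by (cases ps) auto
  show ?case using Cons ps by auto
qed

lemma sum_single:
  assumes "finite I" "i \<in> I" "\<forall>j\<in>I. j \<noteq> i \<longrightarrow> f j = 0"
  shows "sum f I = (f i :: 'b::comm_monoid_add)"
proof -
  have "sum f I = f i + sum f (I - {i})" using assms by (simp add: sum.remove)
  also have "sum f (I - {i}) = 0" using assms(3) by (intro sum.neutral) auto
  finally show ?thesis by simp
qed


definition dvals :: "'f set \<Rightarrow> ('f \<Rightarrow> nat) \<Rightarrow> 'q set \<Rightarrow> ('q list \<Rightarrow> 'f \<Rightarrow> 'q \<Rightarrow> 'b) \<Rightarrow> 'b set" where
  "dvals \<Sigma> rk Q \<delta> = (\<lambda>(\<sigma>,ps,q). \<delta> ps \<sigma> q) ` (SIGMA \<sigma>:\<Sigma>. state_lists Q (rk \<sigma>) \<times> Q)"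

lemma finite_dvals: "finite \<Sigma> \<Longrightarrow> finite Q \<Longrightarrow> finite (dvals \<Sigma> rk Q \<delta>)"
  unfolding dvals_def by (intro finite_imageI finite_SigmaI finite_cartesian_product finite_state_lists)

lemma dvals_mem: "\<sigma> \<in> \<Sigma> \<Longrightarrow> ps \<in> state_lists Q (rk \<sigma>) \<Longrightarrow> q \<in> Q \<Longrightarrow> \<delta> ps \<sigma> q \<in> dvals \<Sigma> rk Q \<delta>"
  unfolding dvals_def by force

lemma vec_op_outside: "q \<notin> Q \<Longrightarrow> vec_op Q \<delta> \<sigma> vs q = 0"
  by (simp add: vec_op_def)

lemma lf_inv:
  assumes "v \<in> nerode_states \<Sigma> rk Q \<delta>"
  shows "\<forall>q. v q \<in> gen_subalg (dvals \<Sigma> rk Q \<delta>)"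
  using assms
proof (induction rule: nerode_states.induct)
  case (1 \<sigma> vs)
  let ?S = "gen_subalg (dvals \<Sigma> rk Q \<delta>)"
  show ?case
  proof
    fix q
    show "vec_op Q \<delta> \<sigma> vs q \<in> ?S"
    proof (cases "q \<in> Q")
      case False then show ?thesis by (simp add: vec_op_def gen_subalg.intros)
    next
      case True
      have "(\<Sum>ps\<in>state_lists Q (length vs). prod_list (map2 (\<lambda>v p. v p) vs ps) * \<delta> ps \<sigma> q) \<in> ?S"
      proof (rule sum_closed)
        show "0 \<in> ?S" by (rule gen_subalg.intros)
        show "\<And>a b. a \<in> ?S \<Longrightarrow> b \<in> ?S \<Longrightarrow> a + b \<in> ?S" by (rule gen_subalg.intros)
        show "\<forall>ps\<in>state_lists Q (length vs). prod_list (map2 (\<lambda>v p. v p) vs ps) * \<delta> ps \<sigma> q \<in> ?S"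
        proof
          fix ps assume ps: "ps \<in> state_lists Q (length vs)"
          have "prod_list (map2 (\<lambda>v p. v p) vs ps) \<in> ?S"
            by (rule prod_map2_closed) (use 1 in \<open>auto intro: gen_subalg.intros\<close>)
          moreover have "\<delta> ps \<sigma> q \<in> ?S"
            using 1 ps True by (auto intro!: gen_subalg.intros(1) dvals_mem)
          ultimately show "prod_list (map2 (\<lambda>v p. v p) vs ps) * \<delta> ps \<sigma> q \<in> ?S"
            by (rule gen_subalg.intros)
        qed
      qed
      then show ?thesis using True by (simp add: vec_op_def)
    qed
  qed
qed


lemma mlf_inv:
  assumes det: "bu_deterministic \<Sigma> rk Q \<delta>" and fQ: "finite Q"
    and "v \<in> nerode_states \<Sigma> rk Q \<delta>"
  shows "(\<forall>q. v q \<in> insert 0 (gen_submon (dvals \<Sigma> rk Q \<delta>))) \<and>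
         (\<forall>q q'. v q \<noteq> 0 \<longrightarrow> v q' \<noteq> 0 \<longrightarrow> q = q')"
  using assms(3)
proof (induction rule: nerode_states.induct)
  case (1 \<sigma> vs)
  let ?S = "insert 0 (gen_submon (dvals \<Sigma> rk Q \<delta>))"
  let ?t = "\<lambda>ps q. prod_list (map2 (\<lambda>v p. v p) vs ps) * \<delta> ps \<sigma> q"
  let ?L = "state_lists Q (length vs)"
  have Sm: "\<And>a b. a \<in> ?S \<Longrightarrow> b \<in> ?S \<Longrightarrow> a * b \<in> ?S"
    by (auto intro: gen_submon.intros)
  have S1: "1 \<in> ?S" by (auto intro: gen_submon.intros)
  have finL: "finite ?L" using fQ by (rule finite_state_lists)
  have nz: "(vs!i) (ps!i) \<noteq> 0" if "ps \<in> ?L" "?t ps q \<noteq> 0" "i < length vs" for ps q i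
  proof (rule prod_map2_nonzero)
    show "prod_list (map2 (\<lambda>v p. v p) vs ps) \<noteq> 0" using that(2) by auto
    show "length ps = length vs" using that(1) by (simp add: state_lists_def)
  qed fact
  have uniq: "ps = ps'" if "ps \<in> ?L" "?t ps q \<noteq> 0" "ps' \<in> ?L" "?t ps' q' \<noteq> 0" for ps ps' q q'
  proof (rule nth_equalityI)
    show "length ps = length ps'" using that by (simp add: state_lists_def)
    fix i assume "i < length ps"
    then have i: "i < length vs" using that by (simp add: state_lists_def)
    then have "vs!i \<in> set vs" by simp
    then show "ps!i = ps'!i" using 1 nz[OF that(1,2) i] nz[OF that(3,4) i] by blast
  qed
  have ex: "\<exists>ps\<in>?L. ?t ps q \<noteq> 0 \<and> vec_op Q \<delta> \<sigma> vs q = ?t ps q"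
    if "vec_op Q \<delta> \<sigma> vs q \<noteq> 0" for q
  proof -
    have q: "q \<in> Q" using that vec_op_outside by metis
    then have "(\<Sum>ps\<in>?L. ?t ps q) \<noteq> 0" using that by (simp add: vec_op_def)
    then obtain ps where ps: "ps \<in> ?L" "?t ps q \<noteq> 0"
      by (blast elim: sum.not_neutral_contains_not_neutral)
    have "(\<Sum>ps\<in>?L. ?t ps q) = ?t ps q"
      by (rule sum_single[OF finL ps(1)]) (use uniq ps in blast)
    then show ?thesis using ps q by (auto simp: vec_op_def)
  qed
  show ?case
  proof (intro conjI allI impI)
    fix q
    show "vec_op Q \<delta> \<sigma> vs q \<in> ?S"
    proof (cases "vec_op Q \<delta> \<sigma> vs q = 0")
      case True then show ?thesis by simp
    next
      case False
      then have q: "q \<in> Q" using vec_op_outside by metis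
      from ex[OF False] obtain ps where ps: "ps \<in> ?L" "vec_op Q \<delta> \<sigma> vs q = ?t ps q" by blast
      have "prod_list (map2 (\<lambda>v p. v p) vs ps) \<in> ?S"
        by (rule prod_map2_closed[OF S1 Sm]) (use 1 in auto)
      moreover have "\<delta> ps \<sigma> q \<in> ?S"
        using 1 ps q by (auto intro!: gen_submon.intros(1) dvals_mem)
      ultimately show ?thesis using ps(2) Sm by simp
    qed
  next
    fix q q' assume a: "vec_op Q \<delta> \<sigma> vs q \<noteq> 0" "vec_op Q \<delta> \<sigma> vs q' \<noteq> 0"
    then have qQ: "q \<in> Q" "q' \<in> Q" using vec_op_outside by metis+
    from ex[OF a(1)] obtain ps where ps: "ps \<in> ?L" "?t ps q \<noteq> 0" by blast
    from ex[OF a(2)] obtain ps' where ps': "ps' \<in> ?L" "?t ps' q' \<noteq> 0" by blast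
    have "ps = ps'" using uniq ps ps' by blast
    then have "\<delta> ps \<sigma> q \<noteq> 0" "\<delta> ps \<sigma> q' \<noteq> 0" using ps ps' by auto
    moreover have "ps \<in> state_lists Q (rk \<sigma>)" using ps 1 by simp
    ultimately show "q = q'" using det 1 qQ unfolding bu_deterministic_def by blast
  qed
qed


lemma hV_in: "\<xi> \<in> trees \<Sigma> rk \<Longrightarrow> hV Q \<delta> \<xi> \<in> nerode_states \<Sigma> rk Q \<delta>"
proof (induction rule: trees.induct)
  case (1 \<sigma> ts)
  then show ?case by (auto intro!: nerode_states.intros)
qed

lemma hV_rel:
  fixes \<Sigma> :: "'f set" and Q :: "'q set" and \<delta> :: "'q list \<Rightarrow> 'f \<Rightarrow> 'q \<Rightarrow> 'b::strong_bimonoid"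
  assumes fin: "finite (nerode_states \<Sigma> rk Q \<delta>)"
  shows "\<xi> \<in> trees \<Sigma> rk \<Longrightarrow> hV (nerode_states \<Sigma> rk Q \<delta>) (rel_trans (vec_op Q \<delta>)) \<xi>
     = (\<lambda>p. if p = hV Q \<delta> \<xi> then 1 else (0::'b))"
proof (induction rule: trees.induct)
  case (1 \<sigma> ts)
  let ?N = "nerode_states \<Sigma> rk Q \<delta>"
  let ?d = "rel_trans (vec_op Q \<delta>) :: ('q \<Rightarrow> 'b) list \<Rightarrow> 'f \<Rightarrow> ('q \<Rightarrow> 'b) \<Rightarrow> 'b"
  let ?us = "map (hV Q \<delta>) ts"
  let ?L = "state_lists ?N (length ts)"
  have m: "map (hV ?N ?d) ts = map (\<lambda>u p. if p = u then 1 else (0::'b)) ?us"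
    using 1 by auto
  have usL: "?us \<in> ?L" using 1 hV_in[of _ \<Sigma> rk Q \<delta>] by (auto simp: state_lists_def)
  have inN: "hV Q \<delta> (Node \<sigma> ts) \<in> ?N" using hV_in 1 by (blast intro: trees.intros)
  show ?case
  proof
    fix p
    show "hV ?N ?d (Node \<sigma> ts) p = (if p = hV Q \<delta> (Node \<sigma> ts) then 1 else 0)"
    proof (cases "p \<in> ?N")
      case False then show ?thesis using inN by (auto simp: vec_op_def)
    next
      case True
      have "hV ?N ?d (Node \<sigma> ts) p =
        (\<Sum>ps\<in>?L. prod_list (map2 (\<lambda>v p. v p) (map (\<lambda>u p. if p = u then 1 else 0) ?us) ps) * ?d ps \<sigma> p)"
        using True by (simp only: hV.simps m) (simp add: vec_op_def)
      also have "\<dots> = prod_list (map2 (\<lambda>v p. v p) (map (\<lambda>u p. if p = u then 1 else 0) ?us) ?us) * ?d ?us \<sigma> p"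
        by (rule sum_single[OF finite_state_lists[OF fin] usL])
          (auto simp del: map_map simp: prod_map2_indicator state_lists_def)
      also have "\<dots> = ?d ?us \<sigma> p" by (simp del: map_map add: prod_map2_indicator)
      also have "\<dots> = (if p = hV Q \<delta> (Node \<sigma> ts) then 1 else 0)"
        by (auto simp: rel_trans_def)
      finally show ?thesis .
    qed
  qed
qed

theorem corollary6p10:
  fixes \<Sigma> :: "'f set" and rk :: "'f \<Rightarrow> nat"
    and Q :: "'q set" and \<delta> :: "'q list \<Rightarrow> 'f \<Rightarrow> 'q \<Rightarrow> 'b::strong_bimonoid" and F :: "'q \<Rightarrow> 'b"
  assumes "ranked_alphabet \<Sigma> rk"
    and "wta Q"
    and "locally_finite TYPE('b) \<or> (mult_locally_finite TYPE('b) \<and> bu_deterministic \<Sigma> rk Q \<delta>)"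
  shows "finite (nerode_states \<Sigma> rk Q \<delta>) \<and>
    (\<forall>\<xi>\<in>trees \<Sigma> rk. init_sem Q \<delta> F \<xi> =
       init_sem (nerode_states \<Sigma> rk Q \<delta>) (rel_trans (vec_op Q \<delta>)) (nerode_final Q F) \<xi>)"
proof -
  let ?N = "nerode_states \<Sigma> rk Q \<delta>"
  have fS: "finite \<Sigma>" using assms(1) by (simp add: ranked_alphabet_def)
  have fQ: "finite Q" using assms(2) by (simp add: wta_def)
  have fD: "finite (dvals \<Sigma> rk Q \<delta>)" using fS fQ by (rule finite_dvals)
  have vecQ: "\<forall>q. q \<notin> Q \<longrightarrow> v q = 0" if "v \<in> ?N" for v
    using that by (induction rule: nerode_states.induct) (auto simp: vec_op_def)
  have finN: "finite ?N"
    using assms(3)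
  proof
    assume lf: "locally_finite TYPE('b)"
    let ?S = "gen_subalg (dvals \<Sigma> rk Q \<delta>)"
    have "finite ?S" using lf fD by (simp add: locally_finite_def)
    then have "finite {v :: 'q \<Rightarrow> 'b. (\<forall>q. v q \<in> ?S) \<and> (\<forall>q. q \<notin> Q \<longrightarrow> v q = 0)}"
      using fQ finite_funs by blast
    moreover have "?N \<subseteq> {v. (\<forall>q. v q \<in> ?S) \<and> (\<forall>q. q \<notin> Q \<longrightarrow> v q = 0)}"
      using lf_inv vecQ by blast
    ultimately show ?thesis by (rule finite_subset[rotated])
  next
    assume mlf: "mult_locally_finite TYPE('b) \<and> bu_deterministic \<Sigma> rk Q \<delta>"
    let ?S = "insert 0 (gen_submon (dvals \<Sigma> rk Q \<delta>))"
    have "finite ?S" using mlf fD by (simp add: mult_locally_finite_def)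
    then have "finite {v :: 'q \<Rightarrow> 'b. (\<forall>q. v q \<in> ?S) \<and> (\<forall>q. q \<notin> Q \<longrightarrow> v q = 0)}"
      using fQ finite_funs by blast
    moreover have "?N \<subseteq> {v. (\<forall>q. v q \<in> ?S) \<and> (\<forall>q. q \<notin> Q \<longrightarrow> v q = 0)}"
      using mlf_inv[OF _ fQ] mlf vecQ by blast
    ultimately show ?thesis by (rule finite_subset[rotated])
  qed
  have "init_sem Q \<delta> F \<xi> = init_sem ?N (rel_trans (vec_op Q \<delta>)) (nerode_final Q F) \<xi>"
    if xi: "\<xi> \<in> trees \<Sigma> rk" for \<xi>
  proof -
    have "init_sem ?N (rel_trans (vec_op Q \<delta>)) (nerode_final Q F) \<xi> =
      (\<Sum>p\<in>?N. (if p = hV Q \<delta> \<xi> then 1 else 0) * nerode_final Q F p)"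
      unfolding init_sem_def hV_rel[OF finN xi] ..
    also have "\<dots> = (if hV Q \<delta> \<xi> = hV Q \<delta> \<xi> then 1 else 0) * nerode_final Q F (hV Q \<delta> \<xi>)"
      by (rule sum_single[OF finN hV_in[OF xi]]) auto
    also have "\<dots> = init_sem Q \<delta> F \<xi>"
      by (simp add: nerode_final_def init_sem_def)
    finally show ?thesis by simp
  qed
  with finN show ?thesis by blast
qed

end
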